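(* Let $d$ and $k$ be integers with $1\le k\le d-1$. There is a constant $C=C(d,k)$ such that for every $d$-dimensional lattice $\Lambda\subseteq\mathbb{R}^d$ with $\lambda_d(\Lambda,B^d)\le1$, writing $\lambda_i=\lambda_i(\Lambda,B^d)$, the set $\Lambda\cap B^d$ can be covered by at most $C(\lambda_k\cdots\lambda_d)^{-1}$ $k$-dimensional linear subspaces of $\mathbb{R}^d$.
   Context: $B^d$ is the closed unit Euclidean ball in $\mathbb{R}^d$ centered at the origin. A $d$-dimensional lattice is the set of all integer linear combinations of $d$ linearly independent vectors of $\mathbb{R}^d$. For a lattice $\Lambda$ and a compact convex body $K$ symmetric about the origin, the $i$th successive minimum is $\lambda_i(\Lambda,K)=\inf\{\lambda\in\mathbb{R}:\dim(\Lambda\cap(\lambda K))\ge i\}$. *)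

theory Defs
  imports "HOL-Analysis.Analysis"
begin

text \<open>A full-rank lattice in a Euclidean space: all integer linear combinations of
  DIM('a) linearly independent vectors.\<close>
definition is_lattice :: "'a::euclidean_space set \<Rightarrow> bool" where
  "is_lattice L \<longleftrightarrow>
     (\<exists>B. independent B \<and> card B = DIM('a) \<and>
          L = {x. \<exists>c. (\<forall>b\<in>B. c b \<in> \<int>) \<and> x = (\<Sum>b\<in>B. c b *\<^sub>R b)})"

text \<open>The i-th successive minimum of L with respect to K:
  inf of the (positive) scalars t with dim (L \<inter> tK) \<ge> i, where dim is the
  dimension of the linear span.\<close>
definition succ_min :: "'a::euclidean_space set \<Rightarrow> 'a set \<Rightarrow> nat \<Rightarrow> real" where
  "succ_min L K i = Inf {t. t > 0 \<and> dim (L \<inter> ((*\<^sub>R) t ` K)) \<ge> i}"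

end

theory Submission
  imports Defs
begin

definition MMf :: "nat \<Rightarrow> nat" where "MMf d = 8 * d"
definition NNf :: "nat \<Rightarrow> nat" where "NNf d = MMf d ^ d"
definition ccf :: "nat \<Rightarrow> real" where "ccf d = 1 / (4 * real (NNf d))"
definition QQf :: "nat \<Rightarrow> real" where "QQf d = 1 + 1 / ccf d"
definition KKf :: "nat \<Rightarrow> real" where "KKf d = QQf d ^ d / ccf d"
definition EEf :: "nat \<Rightarrow> real" where "EEf d = 4 * KKf d / ccf d + 3"

locale lat =
  fixes L :: "'a::euclidean_space set"
  assumes lat: "is_lattice L"
begin

definition B0 :: "'a set" where
  "B0 = (SOME B. independent B \<and> card B = DIM('a) \<and>
          L = {x. \<exists>c. (\<forall>b\<in>B. c b \<in> \<int>) \<and> x = (\<Sum>b\<in>B. c b *\<^sub>R b)})"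

lemma B0: "independent B0" "card B0 = DIM('a)"
  "L = {x. \<exists>c. (\<forall>b\<in>B0. c b \<in> \<int>) \<and> x = (\<Sum>b\<in>B0. c b *\<^sub>R b)}"
proof -
  have "\<exists>B. independent B \<and> card B = DIM('a) \<and>
          L = {x. \<exists>c. (\<forall>b\<in>B. c b \<in> \<int>) \<and> x = (\<Sum>b\<in>B. c b *\<^sub>R b)}"
    using lat unfolding is_lattice_def by blast
  from someI_ex[OF this] show "independent B0" "card B0 = DIM('a)"
  "L = {x. \<exists>c. (\<forall>b\<in>B0. c b \<in> \<int>) \<and> x = (\<Sum>b\<in>B0. c b *\<^sub>R b)}"
    unfolding B0_def by auto
qed

lemma finB0: "finite B0"
  using B0(2) card_ge_0_finite by force

lemma spanB0: "span B0 = UNIV"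
  using B0 dim_eq_full dim_eq_card_independent by metis

lemma memL: "x \<in> L \<longleftrightarrow> (\<exists>c. (\<forall>b\<in>B0. c b \<in> \<int>) \<and> x = (\<Sum>b\<in>B0. c b *\<^sub>R b))"
  using B0(3) by blast

lemma L0: "0 \<in> L"
  unfolding memL by (rule exI[of _ "\<lambda>_. 0"]) auto

lemma Ladd: "x \<in> L \<Longrightarrow> y \<in> L \<Longrightarrow> x + y \<in> L"
proof -
  assume "x \<in> L" "y \<in> L"
  then obtain c c' where "\<forall>b\<in>B0. c b \<in> \<int>" "x = (\<Sum>b\<in>B0. c b *\<^sub>R b)"
    "\<forall>b\<in>B0. c' b \<in> \<int>" "y = (\<Sum>b\<in>B0. c' b *\<^sub>R b)" unfolding memL by blast
  then show ?thesis unfolding memL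
    by (intro exI[of _ "\<lambda>b. c b + c' b"]) (auto simp: scaleR_add_left sum.distrib)
qed

lemma Lneg: "x \<in> L \<Longrightarrow> - x \<in> L"
proof -
  assume "x \<in> L"
  then obtain c where "\<forall>b\<in>B0. c b \<in> \<int>" "x = (\<Sum>b\<in>B0. c b *\<^sub>R b)"
    unfolding memL by blast
  then show ?thesis unfolding memL
    by (intro exI[of _ "\<lambda>b. - c b"]) (auto simp: sum_negf)
qed

lemma Ldiff: "x \<in> L \<Longrightarrow> y \<in> L \<Longrightarrow> x - y \<in> L"
  using Ladd[of x "-y"] Lneg by auto

lemma Lnat: "x \<in> L \<Longrightarrow> of_nat n *\<^sub>R x \<in> L"
  by (induction n) (auto simp: L0 Ladd scaleR_add_left)

lemma Lint: "x \<in> L \<Longrightarrow> of_int n *\<^sub>R x \<in> L"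
proof (cases "n \<ge> 0")
  case True
  assume "x \<in> L"
  then show ?thesis using Lnat[of x "nat n"] True by simp
next
  case False
  assume "x \<in> L"
  then have "of_nat (nat (-n)) *\<^sub>R x \<in> L" by (rule Lnat)
  then show ?thesis using Lneg False by (metis of_int_of_nat_eq nat_0_le neg_0_le_iff_le
      less_imp_le not_le scaleR_left.minus of_int_minus minus_minus)
qed

lemma Lsum: "finite I \<Longrightarrow> (\<And>i. i \<in> I \<Longrightarrow> f i \<in> L) \<Longrightarrow> sum f I \<in> L"
  by (induction I rule: finite_induct) (auto simp: L0 Ladd)

lemma B0L: "B0 \<subseteq> L"
proof
  fix b assume b: "b \<in> B0"
  have "b = (\<Sum>b'\<in>B0. (if b' = b then 1 else 0) *\<^sub>R b')"
  proof -
    have "(\<Sum>b'\<in>B0. (if b' = b then 1 else 0) *\<^sub>R b') = (\<Sum>b'\<in>B0. if b' = b then b' else 0)"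
      by (rule sum.cong) auto
    then show ?thesis using b finB0 by (simp add: sum.delta')
  qed
  then show "b \<in> L" unfolding memL
    by (intro exI[of _ "\<lambda>b'. if b' = b then 1 else 0"]) auto
qed

lemma Lspan: "span L = UNIV"
  using span_mono[OF B0L] spanB0 by auto

lemma disc: "\<exists>\<delta>>0. \<forall>x\<in>L. x \<noteq> 0 \<longrightarrow> \<delta> \<le> norm x"
proof -
  have lin: "linear (\<lambda>x. representation B0 x b)" for b
    by (rule linearI) (simp_all add: representation_add representation_scale B0(1) spanB0)
  have "\<exists>M>0. \<forall>x. \<bar>representation B0 x b\<bar> \<le> M * norm x" for b
    using linear_bounded_pos[OF lin[of b]] by (metis real_norm_def)
  then obtain M where M: "\<And>b. M b > 0" "\<And>b x. \<bar>representation B0 x b\<bar> \<le> M b * norm x"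
    by metis
  define MM where "MM = Max (M ` B0)"
  have MM: "M b \<le> MM" if "b \<in> B0" for b
    using that finB0 by (simp add: MM_def)
  have MMpos: "MM > 0"
  proof -
    have "B0 \<noteq> {}" using B0(2) by auto
    then obtain b where "b \<in> B0" by auto
    then show ?thesis using MM[of b] M(1)[of b] by linarith
  qed
  show ?thesis
  proof (intro exI[of _ "1/MM"] conjI ballI impI)
    show "1/MM > 0" using MMpos by simp
    fix x assume "x \<in> L" "x \<noteq> 0"
    then obtain c where c: "\<forall>b\<in>B0. c b \<in> \<int>" "x = (\<Sum>b\<in>B0. c b *\<^sub>R b)"
      unfolding memL by blast
    have rep: "representation B0 x b = c b" if "b \<in> B0" for b
    proof -
      have "representation B0 x = (\<lambda>b. if b \<in> B0 then c b else 0)"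
      proof (rule representation_eqI[OF B0(1)])
        show "x \<in> span B0" using spanB0 by auto
        show "(if b \<in> B0 then c b else 0) \<noteq> 0 \<Longrightarrow> b \<in> B0" for b by (auto split: if_splits)
        show "finite {b. (if b \<in> B0 then c b else 0) \<noteq> 0}"
          by (rule finite_subset[OF _ finB0]) (auto split: if_splits)
        show "(\<Sum>b | (if b \<in> B0 then c b else 0) \<noteq> 0. (if b \<in> B0 then c b else 0) *\<^sub>R b) = x"
          unfolding c(2) by (rule sum.mono_neutral_cong_left[OF finB0]) (auto split: if_splits)
      qed
      then show ?thesis using that by simp
    qed
    obtain b where b: "b \<in> B0" "c b \<noteq> 0"
      using c \<open>x \<noteq> 0\<close> by (metis (no_types, lifting) scale_zero_left sum.neutral)
    have "1 \<le> \<bar>c b\<bar>" using c(1) b by (metis Ints_cases of_int_0 of_int_abs of_int_le_iff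
        zero_less_abs_iff int_one_le_iff_zero_less of_int_1)
    also have "\<dots> \<le> M b * norm x" using M(2)[of x b] rep[OF b(1)] by simp
    also have "\<dots> \<le> MM * norm x" using MM[OF b(1)] by (simp add: mult_right_mono)
    finally show "1/MM \<le> norm x" using MMpos by (simp add: field_simps)
  qed
qed

definition good :: "'a set \<Rightarrow> 'a \<Rightarrow> bool" where
  "good S w \<longleftrightarrow> w \<in> L \<and> w \<notin> span S \<and> (\<forall>w'\<in>L. w' \<notin> span S \<longrightarrow> norm w \<le> 2 * norm w')"

definition nxt :: "'a set \<Rightarrow> 'a" where "nxt S = (SOME w. good S w)"

lemma nxt_good:
  assumes "span S \<noteq> UNIV" shows "good S (nxt S)"
proof -
  obtain \<delta> where \<delta>: "\<delta> > 0" "\<And>x. x \<in> L \<Longrightarrow> x \<noteq> 0 \<Longrightarrow> \<delta> \<le> norm x" using disc by blast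
  have ne: "L - span S \<noteq> {}"
  proof
    assume "L - span S = {}"
    then have "L \<subseteq> span S" by auto
    then have "span L \<subseteq> span S" by (simp add: span_minimal)
    then show False using Lspan assms by auto
  qed
  define m where "m = Inf (norm ` (L - span S))"
  have bdd: "bdd_below (norm ` (L - span S))" by (rule bdd_belowI[of _ 0]) auto
  have mlow: "m \<le> norm w'" if "w' \<in> L" "w' \<notin> span S" for w'
    unfolding m_def using that bdd by (intro cInf_lower) auto
  have "\<delta> \<le> m" unfolding m_def
  proof (rule cInf_greatest)
    show "norm ` (L - span S) \<noteq> {}" using ne by auto
    fix y assume "y \<in> norm ` (L - span S)"
    then obtain x where "x \<in> L" "x \<notin> span S" "y = norm x" by auto
    moreover have "x \<noteq> 0" using \<open>x \<notin> span S\<close> span_zero by metis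
    ultimately show "\<delta> \<le> y" using \<delta> by auto
  qed
  then have "Inf (norm ` (L - span S)) < 2 * m" using \<delta> m_def by linarith
  then obtain y where "y \<in> norm ` (L - span S)" "y < 2 * m"
    using cInf_lessD[of "norm ` (L - span S)"] ne by blast
  then obtain w where w: "w \<in> L" "w \<notin> span S" "norm w < 2 * m" by auto
  have "good S w" unfolding good_def using w mlow by fastforce
  then show ?thesis unfolding nxt_def by (rule someI)
qed

primrec sq :: "nat \<Rightarrow> 'a set" where
  "sq 0 = {}"
| "sq (Suc j) = insert (nxt (sq j)) (sq j)"

definition v :: "nat \<Rightarrow> 'a" where "v j = nxt (sq j)"

lemma sq_eq: "sq j = v ` {..<j}"
  by (induction j) (auto simp: v_def lessThan_Suc)

abbreviation U :: "nat \<Rightarrow> 'a set" where "U j \<equiv> span (v ` {..<j})"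

lemma constr: "j \<le> DIM('a) \<Longrightarrow> (\<forall>i<j. good (v ` {..<i}) (v i)) \<and> independent (v ` {..<j}) \<and> card (v ` {..<j}) = j"
proof (induction j)
  case 0
  then show ?case by (simp add: independent_empty)
next
  case (Suc j)
  then have IH: "\<forall>i<j. good (v ` {..<i}) (v i)" "independent (v ` {..<j})" "card (v ` {..<j}) = j"
    by auto
  have "dim (v ` {..<j}) = j" using IH dim_eq_card_independent by metis
  then have "span (v ` {..<j}) \<noteq> UNIV" using dim_eq_full Suc.prems by (metis Suc_le_lessD less_irrefl)
  then have g: "good (v ` {..<j}) (v j)" using nxt_good sq_eq v_def by metis
  then have nin: "v j \<notin> span (v ` {..<j})" unfolding good_def by auto
  have nin2: "v j \<notin> v ` {..<j}" using nin span_base by metis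
  show ?case
  proof (intro conjI)
    show "\<forall>i<Suc j. good (v ` {..<i}) (v i)" using IH g less_Suc_eq by auto
    show "independent (v ` {..<Suc j})" unfolding lessThan_Suc image_insert
      using IH(2) nin by (simp add: independent_insert)
    show "card (v ` {..<Suc j}) = Suc j" unfolding lessThan_Suc image_insert
      using IH(3) nin2 by (simp add: card_insert_if)
  qed
qed

lemma vgood: "i < DIM('a) \<Longrightarrow> good (v ` {..<i}) (v i)"
  using constr[of "DIM('a)"] by simp

lemma vL: "i < DIM('a) \<Longrightarrow> v i \<in> L" using vgood[of i] unfolding good_def by simp
lemma vnot: "i < DIM('a) \<Longrightarrow> v i \<notin> U i" using vgood[of i] unfolding good_def by simp
lemma vmin: "i < DIM('a) \<Longrightarrow> w \<in> L \<Longrightarrow> w \<notin> U i \<Longrightarrow> norm (v i) \<le> 2 * norm w"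
  using vgood[of i] unfolding good_def by simp
lemma vind: "independent (v ` {..<DIM('a)})" using constr[of "DIM('a)"] by auto
lemma vinj: "inj_on v {..<DIM('a)}"
  using constr[of "DIM('a)"] by (intro eq_card_imp_inj_on) auto
lemma vspan: "U (DIM('a)) = UNIV"
proof -
  have "dim (v ` {..<DIM('a)}) = DIM('a)"
    using constr[of "DIM('a)"] dim_eq_card_independent[of "v ` {..<DIM('a)}"] by simp
  then show ?thesis using dim_eq_full[of "v ` {..<DIM('a)}"] by simp
qed
lemma vnz: "i < DIM('a) \<Longrightarrow> v i \<noteq> 0"
proof
  assume "i < DIM('a)" "v i = 0"
  then show False using vnot[of i] span_zero[of "v ` {..<i}"] by simp
qed
lemma Umono: "i \<le> j \<Longrightarrow> U i \<subseteq> U j" by (intro span_mono image_mono) auto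
lemma vle: "i < j \<Longrightarrow> j < DIM('a) \<Longrightarrow> norm (v i) \<le> 2 * norm (v j)"
proof -
  assume ij: "i < j" "j < DIM('a)"
  have "v j \<notin> U i" using vnot[OF ij(2)] Umono[of i j] ij by auto
  then show ?thesis using vmin[of i "v j"] vL ij by auto
qed
lemma vle': "i \<le> j \<Longrightarrow> j < DIM('a) \<Longrightarrow> norm (v i) \<le> 2 * norm (v j)"
  using vle[of i j] by (cases "i = j") auto

definition a :: "nat \<Rightarrow> 'a \<Rightarrow> real" where
  "a j x = representation (v ` {..<DIM('a)}) x (v j)"

lemma a_sum: "x = (\<Sum>i<DIM('a). a i x *\<^sub>R v i)"
proof -
  have "(\<Sum>b\<in>v ` {..<DIM('a)}. representation (v ` {..<DIM('a)}) x b *\<^sub>R b) = x"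
    by (rule sum_representation_eq) (auto simp: vind vspan)
  then show ?thesis unfolding a_def by (simp add: sum.reindex[OF vinj])
qed

lemma a_diff: "a j (x - y) = a j x - a j y"
  unfolding a_def by (simp add: representation_diff vind vspan)
lemma a_add: "a j (x + y) = a j x + a j y"
  unfolding a_def by (simp add: representation_add vind vspan)
lemma a_scale: "a j (r *\<^sub>R x) = r * a j x"
  unfolding a_def by (simp add: representation_scale vind vspan)
lemma a_basis: "i < DIM('a) \<Longrightarrow> j < DIM('a) \<Longrightarrow> a j (v i) = (if i = j then 1 else 0)"
proof -
  assume ij: "i < DIM('a)" "j < DIM('a)"
  have r: "representation (v ` {..<DIM('a)}) (v i) = (\<lambda>w. if w = v i then 1 else 0)"
    using representation_basis[OF vind, of "v i"] ij by simp
  have "(v j = v i) = (j = i)" using inj_on_eq_iff[OF vinj, of j i] ij by simp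
  then show ?thesis unfolding a_def r by auto
qed
lemma a_sumv: "finite I \<Longrightarrow> I \<subseteq> {..<DIM('a)} \<Longrightarrow> j < DIM('a) \<Longrightarrow>
   a j (\<Sum>i\<in>I. t i *\<^sub>R v i) = (if j \<in> I then t j else 0)"
proof (induction I rule: finite_induct)
  case empty
  then show ?case unfolding a_def by (simp add: representation_zero)
next
  case (insert i I)
  have i: "i < DIM('a)" using insert.prems by simp
  have e: "a j (\<Sum>i\<in>insert i I. t i *\<^sub>R v i) = t i * a j (v i) + a j (\<Sum>i\<in>I. t i *\<^sub>R v i)"
    using insert.hyps by (simp add: a_add a_scale)
  have IH: "a j (\<Sum>i\<in>I. t i *\<^sub>R v i) = (if j \<in> I then t j else 0)"
    using insert.IH insert.prems by simp
  show ?case unfolding e IH a_basis[OF i insert.prems(2)] using insert.hyps(2) by auto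
qed

lemma a_span: "x \<in> U i \<Longrightarrow> i \<le> j \<Longrightarrow> j < DIM('a) \<Longrightarrow> a j x = 0"
proof -
  assume x: "x \<in> U i" and ij: "i \<le> j" "j < DIM('a)"
  have "a j x = representation (v ` {..<i}) x (v j)"
    unfolding a_def using ij by (intro fun_cong[OF representation_extend[OF vind x]]) auto
  moreover have "v j \<notin> v ` {..<i}"
  proof
    assume "v j \<in> v ` {..<i}"
    then obtain l where "l < i" "v j = v l" by auto
    then show False using vinj ij by (auto simp: inj_on_eq_iff)
  qed
  ultimately show ?thesis using representation_ne_zero by metis
qed

definition S :: "nat \<Rightarrow> 'a \<Rightarrow> 'a" where "S i x = (\<Sum>l<i. a l x *\<^sub>R v l)"

lemma S_U: "S i x \<in> U i"
  unfolding S_def by (intro span_sum span_scale span_base) auto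

lemma S_full: "S (DIM('a)) x = x" using a_sum S_def by simp

lemma S_Suc: "S (Suc i) x = S i x + a i x *\<^sub>R v i"
  unfolding S_def by simp

lemma a_upper: "(\<And>j. i \<le> j \<Longrightarrow> j < DIM('a) \<Longrightarrow> a j x = 0) \<Longrightarrow> i \<le> DIM('a) \<Longrightarrow> x = S i x"
proof -
  assume z: "\<And>j. i \<le> j \<Longrightarrow> j < DIM('a) \<Longrightarrow> a j x = 0" and i: "i \<le> DIM('a)"
  define f where "f l = a l x *\<^sub>R v l" for l
  have split: "{..<DIM('a)} = {..<i} \<union> {i..<DIM('a)}" using i by auto
  have "x = (\<Sum>l<DIM('a). f l)" using a_sum[of x] unfolding f_def by simp
  also have "\<dots> = (\<Sum>l\<in>{..<i} \<union> {i..<DIM('a)}. f l)" by (simp only: split)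
  also have "\<dots> = (\<Sum>l<i. f l) + (\<Sum>l\<in>{i..<DIM('a)}. f l)"
    by (rule sum.union_disjoint) auto
  also have "(\<Sum>l\<in>{i..<DIM('a)}. f l) = 0" using z unfolding f_def by (intro sum.neutral) auto
  finally show ?thesis unfolding S_def f_def by simp
qed

lemma p_S: "p \<in> U j \<Longrightarrow> j \<le> DIM('a) \<Longrightarrow> p = S j p"
  by (rule a_upper) (auto intro: a_span)

lemma MM_def: "(MMf DIM('a)) = 8 * DIM('a)" by (simp add: MMf_def)
lemma NN_def: "(NNf DIM('a)) = (MMf DIM('a)) ^ DIM('a)" by (simp add: NNf_def)
lemma cc_def: "(ccf DIM('a)) = 1 / (4 * real (NNf DIM('a)))" by (simp add: ccf_def)

lemma MM_pos: "(MMf DIM('a)) > 0" unfolding MM_def by simp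
lemma NN_pos: "(NNf DIM('a)) > 0" unfolding NN_def using MM_pos by simp
lemma cc_pos: "(ccf DIM('a)) > 0" unfolding cc_def using NN_pos by simp

lemma dirichlet:
  assumes j: "j < DIM('a)" and w: "w \<in> L" "w \<notin> U j" and p: "p \<in> U j"
  shows "(ccf DIM('a)) * norm (v j) \<le> norm (w - p)"
proof -
  define t where "t i = a i p" for i
  have pS: "p = (\<Sum>i<j. t i *\<^sub>R v i)" using p_S[OF p] j unfolding S_def t_def by simp
  define f where "f n = (\<lambda>i\<in>{..<j}. nat \<lfloor>frac (real n * t i) * real (MMf DIM('a))\<rfloor>)" for n :: nat
  have fin: "f n \<in> PiE {..<j} (\<lambda>_. {..<(MMf DIM('a))})" for n
  proof -
    have "nat \<lfloor>frac (real n * t i) * real (MMf DIM('a))\<rfloor> < (MMf DIM('a))" for i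
    proof -
      have "frac (real n * t i) * real (MMf DIM('a)) < 1 * real (MMf DIM('a))"
        using frac_lt_1 MM_pos by (intro mult_strict_right_mono) auto
      then have "\<lfloor>frac (real n * t i) * real (MMf DIM('a))\<rfloor> < int (MMf DIM('a))"
        by (simp add: floor_less_iff)
      then show ?thesis using MM_pos by linarith
    qed
    then show ?thesis unfolding f_def by auto
  qed
  have cardP: "card (PiE {..<j} (\<lambda>_. {..<(MMf DIM('a))})) = (MMf DIM('a)) ^ j"
    by (simp add: card_PiE)
  have "(MMf DIM('a)) ^ j \<le> (NNf DIM('a))" unfolding NN_def using MM_pos j by (intro power_increasing) auto
  then have "card (PiE {..<j} (\<lambda>_. {..<(MMf DIM('a))})) < card {0..(NNf DIM('a))}" using cardP by simp
  then have "\<not> inj_on f {0..(NNf DIM('a))}"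
    using card_inj_on_le[of f "{0..(NNf DIM('a))}" "PiE {..<j} (\<lambda>_. {..<(MMf DIM('a))})"] fin
    by (auto simp: finite_PiE)
  then obtain n1 n2 where nn: "n1 \<in> {0..(NNf DIM('a))}" "n2 \<in> {0..(NNf DIM('a))}" "n1 \<noteq> n2" "f n1 = f n2"
    unfolding inj_on_def by blast
  have "\<exists>n1 n2. n1 < n2 \<and> n2 \<le> (NNf DIM('a)) \<and> f n1 = f n2"
  proof (cases "n1 < n2")
    case True then show ?thesis using nn by auto
  next
    case False then have "n2 < n1" using nn by auto
    then show ?thesis using nn by (intro exI[of _ n2] exI[of _ n1]) auto
  qed
  then obtain m1 m2 where m: "m1 < m2" "m2 \<le> (NNf DIM('a))" "f m1 = f m2" by blast
  define n where "n = m2 - m1"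
  have n: "1 \<le> n" "n \<le> (NNf DIM('a))" using m unfolding n_def by auto
  define r where "r i = \<lfloor>real m2 * t i\<rfloor> - \<lfloor>real m1 * t i\<rfloor>" for i
  have close: "\<bar>real n * t i - real_of_int (r i)\<bar> \<le> 1 / real (MMf DIM('a))" if i: "i < j" for i
  proof -
    have "f m1 i = f m2 i" using m by simp
    then have e: "nat \<lfloor>frac (real m1 * t i) * real (MMf DIM('a))\<rfloor> = nat \<lfloor>frac (real m2 * t i) * real (MMf DIM('a))\<rfloor>"
      using i unfolding f_def by simp
    have "0 \<le> frac (real m1 * t i) * real (MMf DIM('a))" "0 \<le> frac (real m2 * t i) * real (MMf DIM('a))"
      by (simp_all add: frac_ge_0)
    then have "0 \<le> \<lfloor>frac (real m1 * t i) * real (MMf DIM('a))\<rfloor>" "0 \<le> \<lfloor>frac (real m2 * t i) * real (MMf DIM('a))\<rfloor>"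
      by (simp_all only: zero_le_floor)
    then have e2: "\<lfloor>frac (real m1 * t i) * real (MMf DIM('a))\<rfloor> = \<lfloor>frac (real m2 * t i) * real (MMf DIM('a))\<rfloor>"
      using arg_cong[OF e, of int] by (simp only: int_nat_eq if_True) 
    define X1 where "X1 = frac (real m1 * t i) * real (MMf DIM('a))"
    define X2 where "X2 = frac (real m2 * t i) * real (MMf DIM('a))"
    have e3: "\<lfloor>X1\<rfloor> = \<lfloor>X2\<rfloor>" using e2 unfolding X1_def X2_def .
    have b: "real_of_int \<lfloor>X1\<rfloor> \<le> X1" "X1 < real_of_int \<lfloor>X1\<rfloor> + 1"
      "real_of_int \<lfloor>X2\<rfloor> \<le> X2" "X2 < real_of_int \<lfloor>X2\<rfloor> + 1"
      by (rule of_int_floor_le real_of_int_floor_add_one_gt)+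
    have "X2 - X1 < 1" "X1 - X2 < 1" using b e3 by linarith+
    then have "\<bar>X2 - X1\<bar> < 1" by (auto simp: abs_less_iff)
    then have d: "\<bar>frac (real m2 * t i) - frac (real m1 * t i)\<bar> * real (MMf DIM('a)) < 1"
      unfolding X1_def X2_def using MM_pos
      by (simp add: left_diff_distrib[symmetric] abs_mult)
    have "real n * t i - real_of_int (r i) = frac (real m2 * t i) - frac (real m1 * t i)"
      unfolding n_def r_def frac_def using m(1) by (simp add: of_nat_diff left_diff_distrib)
    then have "\<bar>real n * t i - real_of_int (r i)\<bar> * real (MMf DIM('a)) < 1" using d by simp
    then show ?thesis using MM_pos by (simp add: pos_le_divide_eq)
  qed
  define u where "u = (\<Sum>i<j. of_int (r i) *\<^sub>R v i)"
  have uL: "u \<in> L" unfolding u_def using j by (intro Lsum Lint vL) auto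
  have uU: "u \<in> U j" unfolding u_def by (intro span_sum span_scale span_base) auto
  have eqnp: "real n *\<^sub>R p - u = (\<Sum>i<j. (real n * t i - of_int (r i)) *\<^sub>R v i)"
    unfolding pS u_def by (simp add: scaleR_sum_right sum_subtractf scaleR_diff_left)
  have "norm (real n *\<^sub>R p - u) \<le> (\<Sum>i<j. norm ((real n * t i - of_int (r i)) *\<^sub>R v i))"
    unfolding eqnp by (rule norm_sum)
  also have "\<dots> \<le> (\<Sum>i<j. (1 / real (MMf DIM('a))) * (2 * norm (v j)))"
  proof (rule sum_mono)
    fix i assume i: "i \<in> {..<j}"
    have "norm ((real n * t i - of_int (r i)) *\<^sub>R v i) = \<bar>real n * t i - of_int (r i)\<bar> * norm (v i)"
      by simp
    also have "\<dots> \<le> (1 / real (MMf DIM('a))) * (2 * norm (v j))"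
      using close[of i] vle[of i j] i j by (intro mult_mono) auto
    finally show "norm ((real n * t i - of_int (r i)) *\<^sub>R v i) \<le> (1 / real (MMf DIM('a))) * (2 * norm (v j))" .
  qed
  also have "\<dots> = real j * (2 * norm (v j)) / real (MMf DIM('a))" by simp
  also have "\<dots> \<le> norm (v j) / 4"
  proof -
    have "real j * (2 * norm (v j)) \<le> real DIM('a) * (2 * norm (v j))"
      using j by (intro mult_right_mono) auto
    then show ?thesis unfolding MM_def by (simp add: field_simps)
  qed
  finally have np: "norm (real n *\<^sub>R p - u) \<le> norm (v j) / 4" .
  define z where "z = real n *\<^sub>R w - u"
  have zL: "z \<in> L" unfolding z_def using Ldiff Lnat uL w by auto
  have zU: "z \<notin> U j"
  proof
    assume "z \<in> U j"
    then have "real n *\<^sub>R w \<in> U j" using uU unfolding z_def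
      by (metis diff_add_cancel span_add)
    then have "(1 / real n) *\<^sub>R (real n *\<^sub>R w) \<in> U j" by (rule span_scale)
    then show False using w n by simp
  qed
  have "norm (v j) \<le> 2 * norm z" using vmin[OF j zL zU] .
  also have "z = real n *\<^sub>R (w - p) + (real n *\<^sub>R p - u)" unfolding z_def
    by (simp add: scaleR_diff_right)
  also have "norm \<dots> \<le> real n * norm (w - p) + norm (v j) / 4"
    using np norm_triangle_ineq[of "real n *\<^sub>R (w - p)" "real n *\<^sub>R p - u"] by simp
  also have "real n * norm (w - p) \<le> real (NNf DIM('a)) * norm (w - p)"
    using n by (intro mult_right_mono) auto
  finally have "norm (v j) \<le> 2 * (real (NNf DIM('a)) * norm (w - p) + norm (v j) / 4)" by simp
  then have "norm (v j) \<le> 4 * real (NNf DIM('a)) * norm (w - p)" by simp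
  then show ?thesis unfolding cc_def using NN_pos by (simp add: field_simps)
qed

lemma coord1:
  assumes j: "j < DIM('a)"
  shows "\<bar>a j x\<bar> * ((ccf DIM('a)) * norm (v j)) \<le> norm (S (Suc j) x)"
proof (cases "a j x = 0")
  case True then show ?thesis by simp
next
  case False
  have p: "- ((1 / a j x) *\<^sub>R S j x) \<in> U j" by (intro span_neg span_scale S_U)
  have "(ccf DIM('a)) * norm (v j) \<le> norm (v j - - ((1 / a j x) *\<^sub>R S j x))"
    by (rule dirichlet[OF j vL[OF j] vnot[OF j] p])
  then have "\<bar>a j x\<bar> * ((ccf DIM('a)) * norm (v j)) \<le> \<bar>a j x\<bar> * norm (v j + (1 / a j x) *\<^sub>R S j x)"
    by (simp add: mult_left_mono)
  also have "\<dots> = norm (a j x *\<^sub>R (v j + (1 / a j x) *\<^sub>R S j x))" by simp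
  also have "a j x *\<^sub>R (v j + (1 / a j x) *\<^sub>R S j x) = S (Suc j) x"
    using False by (simp add: S_Suc scaleR_add_right add.commute)
  finally show ?thesis .
qed

lemma coord2:
  assumes j: "j < DIM('a)"
  shows "\<bar>a j x\<bar> * norm (v j) \<le> norm (S (Suc j) x) / (ccf DIM('a))"
  using coord1[OF j, of x] cc_pos by (simp add: field_simps)

lemma QQ_def: "(QQf DIM('a)) = 1 + 1 / (ccf DIM('a))" by (simp add: QQf_def)

lemma QQ_ge: "(QQf DIM('a)) \<ge> 1" unfolding QQ_def using cc_pos by simp

lemma Sbound_aux: "\<forall>j. DIM('a) - j = m \<longrightarrow> j \<le> DIM('a) \<longrightarrow> norm (S j x) \<le> (QQf DIM('a)) ^ m * norm x"
proof (induction m)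
  case 0
  show ?case
  proof (intro allI impI)
    fix j assume "DIM('a) - j = 0" "j \<le> DIM('a)"
    then have "j = DIM('a)" by simp
    then show "norm (S j x) \<le> (QQf DIM('a)) ^ 0 * norm x" using S_full by simp
  qed
next
  case (Suc m)
  show ?case
  proof (intro allI impI)
    fix j assume jm: "DIM('a) - j = Suc m" "j \<le> DIM('a)"
    then have j: "j < DIM('a)" "DIM('a) - Suc j = m" "Suc j \<le> DIM('a)" by auto
    have IH: "norm (S (Suc j) x) \<le> (QQf DIM('a)) ^ m * norm x" using Suc.IH j by blast
    have "S j x = S (Suc j) x - a j x *\<^sub>R v j" by (simp add: S_Suc)
    then have "norm (S j x) \<le> norm (S (Suc j) x) + \<bar>a j x\<bar> * norm (v j)"
      using norm_triangle_ineq4[of "S (Suc j) x" "a j x *\<^sub>R v j"] by simp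
    also have "\<dots> \<le> norm (S (Suc j) x) + norm (S (Suc j) x) / (ccf DIM('a))"
      using coord2[OF j(1)] by simp
    also have "\<dots> = (QQf DIM('a)) * norm (S (Suc j) x)" unfolding QQ_def by (simp add: field_simps)
    also have "\<dots> \<le> (QQf DIM('a)) * ((QQf DIM('a)) ^ m * norm x)" using IH QQ_ge by (intro mult_left_mono) auto
    finally show "norm (S j x) \<le> (QQf DIM('a)) ^ Suc m * norm x" using jm by simp
  qed
qed

lemma KK_def: "(KKf DIM('a)) = (QQf DIM('a)) ^ DIM('a) / (ccf DIM('a))" by (simp add: KKf_def)

lemma KK_pos: "(KKf DIM('a)) > 0" unfolding KK_def using QQ_ge cc_pos by simp

lemma coord_bound:
  assumes j: "j < DIM('a)"
  shows "\<bar>a j x\<bar> * norm (v j) \<le> (KKf DIM('a)) * norm x"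
proof -
  have "norm (S (Suc j) x) \<le> (QQf DIM('a)) ^ (DIM('a) - Suc j) * norm x"
    using Sbound_aux[of "DIM('a) - Suc j" x] j by simp
  also have "\<dots> \<le> (QQf DIM('a)) ^ DIM('a) * norm x"
    using QQ_ge by (intro mult_right_mono power_increasing) auto
  finally have "norm (S (Suc j) x) / (ccf DIM('a)) \<le> (QQf DIM('a)) ^ DIM('a) * norm x / (ccf DIM('a))"
    using cc_pos by (simp add: divide_right_mono)
  then show ?thesis using coord2[OF j, of x] unfolding KK_def by simp
qed

lemma separation:
  assumes x: "x \<in> L" and y: "y \<in> L"
    and close: "\<And>j. k0 \<le> j \<Longrightarrow> j < DIM('a) \<Longrightarrow> \<bar>a j x - a j y\<bar> < (ccf DIM('a))"
    and j: "k0 \<le> j" "j < DIM('a)"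
  shows "a j x = a j y"
proof (rule ccontr)
  assume ne: "a j x \<noteq> a j y"
  define z where "z = x - y"
  have zL: "z \<in> L" unfolding z_def using x y Ldiff by auto
  have az: "a l z = a l x - a l y" for l unfolding z_def by (simp add: a_diff)
  define Z where "Z = {l. k0 \<le> l \<and> l < DIM('a) \<and> a l z \<noteq> 0}"
  have finZ: "finite Z" unfolding Z_def by auto
  have "j \<in> Z" unfolding Z_def using j ne az by auto
  then have Zne: "Z \<noteq> {}" by auto
  define j0 where "j0 = Max Z"
  have j0Z: "j0 \<in> Z" unfolding j0_def using finZ Zne by (rule Max_in)
  then have j0: "k0 \<le> j0" "j0 < DIM('a)" "a j0 z \<noteq> 0" unfolding Z_def by auto
  have above: "a l z = 0" if "Suc j0 \<le> l" "l < DIM('a)" for l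
  proof (rule ccontr)
    assume "a l z \<noteq> 0"
    then have "l \<in> Z" unfolding Z_def using that j0 by auto
    then have "l \<le> j0" unfolding j0_def using finZ by simp
    then show False using that by simp
  qed
  have zS: "z = S (Suc j0) z" using above j0 by (intro a_upper) auto
  have zU: "z \<notin> U j0"
  proof
    assume "z \<in> U j0"
    then have "a j0 z = 0" using a_span[of z j0 j0] j0 by simp
    then show False using j0 by simp
  qed
  have "(ccf DIM('a)) * norm (v j0) \<le> norm (z - S j0 z)"
    by (rule dirichlet[OF j0(2) zL zU S_U])
  also have "z - S j0 z = a j0 z *\<^sub>R v j0" using zS by (metis S_Suc add_diff_cancel_left')
  finally have "(ccf DIM('a)) * norm (v j0) \<le> \<bar>a j0 z\<bar> * norm (v j0)" by simp
  then have "(ccf DIM('a)) \<le> \<bar>a j0 z\<bar>" using vnz[OF j0(2)] by simp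
  then show False using close[OF j0(1,2)] az by simp
qed

abbreviation lam :: "nat \<Rightarrow> real" where "lam i \<equiv> succ_min L (cball 0 1) i"

lemma EE_def: "(EEf DIM('a)) = 4 * (KKf DIM('a)) / (ccf DIM('a)) + 3" by (simp add: EEf_def)

lemma in_scaled: "t > 0 \<Longrightarrow> x \<in> (*\<^sub>R) t ` cball 0 1 \<longleftrightarrow> norm x \<le> t"
proof
  assume t: "t > 0" and "x \<in> (*\<^sub>R) t ` cball 0 1"
  then obtain y where "norm y \<le> 1" "x = t *\<^sub>R y" by auto
  then show "norm x \<le> t" using t by (simp add: mult_left_le)
next
  assume t: "t > 0" and x: "norm x \<le> t"
  have "x = t *\<^sub>R ((1 / t) *\<^sub>R x)" using t by simp
  moreover have "(1 / t) *\<^sub>R x \<in> cball 0 1" using t x by (simp add: field_simps)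
  ultimately show "x \<in> (*\<^sub>R) t ` cball 0 1" by blast
qed

lemma in_set_v:
  assumes j: "j < DIM('a)"
  shows "2 * norm (v j) \<in> {t. t > 0 \<and> dim (L \<inter> ((*\<^sub>R) t ` cball 0 1)) \<ge> Suc j}"
proof -
  have t: "2 * norm (v j) > 0" using vnz[OF j] by simp
  have sub: "v ` {..<Suc j} \<subseteq> L \<inter> ((*\<^sub>R) (2 * norm (v j)) ` cball 0 1)"
  proof
    fix x assume "x \<in> v ` {..<Suc j}"
    then obtain i where i0: "i < Suc j" "x = v i" by blast
    then have i: "i \<le> j" "x = v i" by auto
    then show "x \<in> L \<inter> ((*\<^sub>R) (2 * norm (v j)) ` cball 0 1)"
      using vL[of i] j in_scaled[OF t] vle'[OF i(1) j] by auto
  qed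
  have ind: "independent (v ` {..<Suc j})"
    by (rule independent_mono[OF vind]) (use j in auto)
  have "card (v ` {..<Suc j}) = Suc j"
    using inj_on_subset[OF vinj, of "{..<Suc j}"] j by (simp add: card_image)
  then have "Suc j \<le> dim (L \<inter> ((*\<^sub>R) (2 * norm (v j)) ` cball 0 1))"
    using independent_card_le_dim[OF sub ind] by simp
  then show ?thesis using t by simp
qed

lemma bdd_set: "bdd_below {t. t > 0 \<and> dim (L \<inter> ((*\<^sub>R) t ` cball 0 (1::real))) \<ge> i}"
  by (rule bdd_belowI[of _ 0]) auto

lemma lam_le: "j < DIM('a) \<Longrightarrow> lam (Suc j) \<le> 2 * norm (v j)"
  unfolding succ_min_def using in_set_v bdd_set by (intro cInf_lower) auto

lemma lam_pos:
  assumes i: "1 \<le> i" "i \<le> DIM('a)"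
  shows "lam i > 0"
proof -
  obtain \<delta> where \<delta>: "\<delta> > 0" "\<And>x. x \<in> L \<Longrightarrow> x \<noteq> 0 \<Longrightarrow> \<delta> \<le> norm x" using disc by blast
  obtain j where j: "i = Suc j" "j < DIM('a)" using i by (cases i) auto
  have "\<delta> \<le> lam i" unfolding succ_min_def
  proof (rule cInf_greatest)
    show "{t. t > 0 \<and> dim (L \<inter> ((*\<^sub>R) t ` cball 0 1)) \<ge> i} \<noteq> {}"
      using in_set_v[OF j(2)] j(1) by blast
    fix t assume "t \<in> {t. t > 0 \<and> dim (L \<inter> ((*\<^sub>R) t ` cball 0 1)) \<ge> i}"
    then have t: "t > 0" "dim (L \<inter> ((*\<^sub>R) t ` cball 0 1)) \<ge> i" by auto
    have "\<exists>x \<in> L \<inter> ((*\<^sub>R) t ` cball 0 1). x \<noteq> 0"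
    proof (rule ccontr)
      assume "\<not> ?thesis"
      then have "L \<inter> ((*\<^sub>R) t ` cball 0 1) \<subseteq> {0}" by auto
      then have "dim (L \<inter> ((*\<^sub>R) t ` cball 0 1)) \<le> dim {0::'a}" by (rule dim_subset)
      also have "dim {0::'a} = 0" by (simp add: dim_insert span_zero)
      finally have "dim (L \<inter> ((*\<^sub>R) t ` cball 0 1)) \<le> 0" .
      then show False using t(2) i(1) by linarith
    qed
    then obtain x where "x \<in> L" "norm x \<le> t" "x \<noteq> 0" using in_scaled[OF t(1)] by auto
    then show "\<delta> \<le> t" using \<delta> by force
  qed
  then show ?thesis using \<delta> by simp
qed

lemma lam_le1:
  assumes one: "lam DIM('a) \<le> 1" and i: "i \<le> DIM('a)"
  shows "lam i \<le> 1"
proof -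
  obtain j where j: "DIM('a) = Suc j" "j < DIM('a)" by (cases "DIM('a)") auto
  have "lam i \<le> lam DIM('a)" unfolding succ_min_def
  proof (rule cInf_superset_mono)
    show "{t. t > 0 \<and> dim (L \<inter> ((*\<^sub>R) t ` cball 0 1)) \<ge> DIM('a)} \<noteq> {}"
      using in_set_v[OF j(2)] j(1) by (metis empty_iff)
    show "bdd_below {t. t > 0 \<and> dim (L \<inter> ((*\<^sub>R) t ` cball 0 1)) \<ge> i}" by (rule bdd_set)
    show "{t. t > 0 \<and> dim (L \<inter> ((*\<^sub>R) t ` cball 0 1)) \<ge> DIM('a)}
        \<subseteq> {t. t > 0 \<and> dim (L \<inter> ((*\<^sub>R) t ` cball 0 1)) \<ge> i}" using i by auto
  qed
  then show ?thesis using one by simp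
qed

lemma floor_close: "\<lfloor>p::real\<rfloor> = \<lfloor>q\<rfloor> \<Longrightarrow> \<bar>p - q\<bar> < 1"
proof -
  assume e: "\<lfloor>p\<rfloor> = \<lfloor>q\<rfloor>"
  have b: "real_of_int \<lfloor>p\<rfloor> \<le> p" "p < real_of_int \<lfloor>p\<rfloor> + 1"
      "real_of_int \<lfloor>q\<rfloor> \<le> q" "q < real_of_int \<lfloor>q\<rfloor> + 1"
      by (rule of_int_floor_le real_of_int_floor_add_one_gt)+
  have "p - q < 1" "q - p < 1" using b e by linarith+
  then show ?thesis by (auto simp: abs_less_iff)
qed

lemma cover:
  assumes k: "1 \<le> k" "k \<le> DIM('a)" and one: "lam DIM('a) \<le> 1"
  shows "\<exists>F. finite F \<and> (\<forall>V\<in>F. subspace V \<and> dim V = k) \<and> L \<inter> cball 0 1 \<subseteq> \<Union>F \<and>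
           real (card F) \<le> (EEf DIM('a)) ^ DIM('a) / (\<Prod>i=k..DIM('a). lam i)"
proof -
  define k0 where "k0 = k - 1"
  have k0: "k0 < DIM('a)" "Suc k0 = k" using k unfolding k0_def by auto
  define J where "J = {k0..<DIM('a)}"
  have finJ: "finite J" unfolding J_def by simp
  have Jd: "J \<subseteq> {..<DIM('a)}" unfolding J_def by auto
  define B where "B = L \<inter> cball (0::'a) 1"
  define T where "T x = restrict (\<lambda>j. a j x) J" for x
  define h where "h \<tau> = restrict (\<lambda>j. \<lfloor>\<tau> j / (ccf DIM('a))\<rfloor>) J" for \<tau> :: "nat \<Rightarrow> real"
  define R where "R j = (KKf DIM('a)) / ((ccf DIM('a)) * norm (v j))" for j
  define Q where "Q j = \<lceil>R j\<rceil>" for j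
  define P where "P = PiE J (\<lambda>j. {-Q j..Q j})"
  have Rpos: "R j > 0" if "j < DIM('a)" for j
    unfolding R_def using KK_pos cc_pos vnz[OF that] by simp
  have hT: "h (T x) \<in> P" if x: "x \<in> B" for x
  proof -
    have "\<lfloor>a j x / (ccf DIM('a))\<rfloor> \<in> {-Q j..Q j}" if j: "j \<in> J" for j
    proof -
      have jd: "j < DIM('a)" using j Jd by auto
      have nx: "norm x \<le> 1" using x unfolding B_def by auto
      have "\<bar>a j x\<bar> * norm (v j) \<le> (KKf DIM('a)) * norm x" by (rule coord_bound[OF jd])
      also have "\<dots> \<le> (KKf DIM('a))" using nx KK_pos by (simp add: mult_left_le)
      finally have "\<bar>a j x\<bar> \<le> (KKf DIM('a)) / norm (v j)"
        using vnz[OF jd] by (simp add: field_simps)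
      then have y: "\<bar>a j x / (ccf DIM('a))\<bar> \<le> R j"
        unfolding R_def using cc_pos vnz[OF jd] by (simp add: field_simps abs_divide)
      have RQ: "R j \<le> of_int (Q j)" unfolding Q_def by simp
      have "of_int (- Q j) \<le> a j x / (ccf DIM('a))" using y RQ by linarith
      then have 1: "- Q j \<le> \<lfloor>a j x / (ccf DIM('a))\<rfloor>" by (simp only: le_floor_iff)
      have "a j x / (ccf DIM('a)) < of_int (Q j) + 1" using y RQ by linarith
      then have 2: "\<lfloor>a j x / (ccf DIM('a))\<rfloor> \<le> Q j" by (simp only: floor_le_iff)
      show ?thesis using 1 2 by simp
    qed
    then show ?thesis unfolding P_def h_def T_def by auto
  qed
  have inj: "inj_on h (T ` B)"
  proof (rule inj_onI)
    fix \<tau>1 \<tau>2 assume t1: "\<tau>1 \<in> T ` B" and t2: "\<tau>2 \<in> T ` B" and e: "h \<tau>1 = h \<tau>2"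
    obtain x where x: "x \<in> B" "\<tau>1 = T x" using t1 by auto
    obtain y where y: "y \<in> B" "\<tau>2 = T y" using t2 by auto
    have close: "\<bar>a j x - a j y\<bar> < (ccf DIM('a))" if "k0 \<le> j" "j < DIM('a)" for j
    proof -
      have jJ: "j \<in> J" unfolding J_def using that by auto
      have "h \<tau>1 j = h \<tau>2 j" using e by simp
      then have "\<lfloor>a j x / (ccf DIM('a))\<rfloor> = \<lfloor>a j y / (ccf DIM('a))\<rfloor>"
        using jJ x y unfolding h_def T_def by simp
      then have "\<bar>a j x / (ccf DIM('a)) - a j y / (ccf DIM('a))\<bar> < 1" by (rule floor_close)
      then have "\<bar>a j x - a j y\<bar> / (ccf DIM('a)) < 1"
        using cc_pos by (simp add: diff_divide_distrib[symmetric] abs_divide)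
      then show ?thesis using cc_pos by (simp add: field_simps)
    qed
    have "a j x = a j y" if "j \<in> J" for j
      using separation[of x y k0 j] x y close that unfolding B_def J_def by auto
    then show "\<tau>1 = \<tau>2" unfolding x y T_def by (intro ext) auto
  qed
  have finP: "finite P" unfolding P_def using finJ by (simp add: finite_PiE)
  have hTB: "h ` (T ` B) \<subseteq> P" using hT by auto
  have cardTB: "card (T ` B) \<le> card P" by (rule card_inj_on_le[OF inj hTB finP])
  have finTB: "finite (T ` B)" using finite_imageD[OF finite_subset[OF hTB finP] inj] .
  have "real (card P) = (\<Prod>j\<in>J. real (card {-Q j..Q j}))"
    unfolding P_def using finJ by (simp add: card_PiE)
  also have "\<dots> \<le> (\<Prod>j\<in>J. (EEf DIM('a)) / lam (Suc j))"
  proof (rule prod_mono)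
    fix j assume j: "j \<in> J"
    have jd: "j < DIM('a)" using j Jd by auto
    have Q0: "0 \<le> Q j" unfolding Q_def using Rpos[OF jd] by simp
    have "real (card {-Q j..Q j}) = 2 * of_int (Q j) + 1" using Q0 by simp
    also have "\<dots> \<le> 2 * R j + 3" unfolding Q_def using of_int_ceiling_le_add_one[of "R j"] by linarith
    also have "\<dots> \<le> (EEf DIM('a)) / lam (Suc j)"
    proof -
      have lp: "lam (Suc j) > 0" using lam_pos[of "Suc j"] jd by simp
      have l1: "lam (Suc j) \<le> 1" using lam_le1[OF one, of "Suc j"] jd by simp
      have l2: "lam (Suc j) \<le> 2 * norm (v j)" by (rule lam_le[OF jd])
      have vp: "norm (v j) > 0" using vnz[OF jd] by simp
      have "1 / norm (v j) \<le> 2 / lam (Suc j)" using lp vp l2 by (simp add: field_simps)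
      then have "2 * R j \<le> (2 * (KKf DIM('a)) / (ccf DIM('a))) * (2 / lam (Suc j))"
        unfolding R_def using KK_pos cc_pos
        by (subst (asm) mult_le_cancel_left_pos[of "2 * (KKf DIM('a)) / (ccf DIM('a))", symmetric])
           (auto simp: field_simps)
      moreover have "3 \<le> 3 / lam (Suc j)" using lp l1 by (simp add: field_simps)
      ultimately have "2 * R j + 3 \<le> (4 * (KKf DIM('a)) / (ccf DIM('a))) / lam (Suc j) + 3 / lam (Suc j)"
        by (simp add: field_simps)
      also have "\<dots> = (EEf DIM('a)) / lam (Suc j)" unfolding EE_def by (simp add: add_divide_distrib)
      finally show ?thesis .
    qed
    finally show "0 \<le> real (card {-Q j..Q j}) \<and> real (card {-Q j..Q j}) \<le> (EEf DIM('a)) / lam (Suc j)"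
      by simp
  qed
  also have "\<dots> = (EEf DIM('a)) ^ card J / (\<Prod>j\<in>J. lam (Suc j))"
    by (simp add: prod_dividef)
  also have "(\<Prod>j\<in>J. lam (Suc j)) = (\<Prod>i=k..DIM('a). lam i)"
  proof -
    have "(\<Prod>j\<in>J. lam (Suc j)) = (\<Prod>i\<in>Suc ` J. lam i)"
      by (simp add: prod.reindex)
    also have "Suc ` J = {k..DIM('a)}" unfolding J_def using k0
      by (simp add: atLeastLessThanSuc_atLeastAtMost)
    finally show ?thesis .
  qed
  also have "(EEf DIM('a)) ^ card J / (\<Prod>i=k..DIM('a). lam i) \<le> (EEf DIM('a)) ^ DIM('a) / (\<Prod>i=k..DIM('a). lam i)"
  proof (rule divide_right_mono)
    show "0 \<le> (\<Prod>i=k..DIM('a). lam i)" using lam_pos k by (intro prod_nonneg) (auto intro: less_imp_le)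
    have "(EEf DIM('a)) \<ge> 1" unfolding EE_def using KK_pos cc_pos by (simp add: add_nonneg_nonneg)
    moreover have "card J \<le> DIM('a)" unfolding J_def by simp
    ultimately show "(EEf DIM('a)) ^ card J \<le> (EEf DIM('a)) ^ DIM('a)" by (rule power_increasing[rotated])
  qed
  finally have cardP: "real (card P) \<le> (EEf DIM('a)) ^ DIM('a) / (\<Prod>i=k..DIM('a). lam i)" .
  \<comment> \<open>the subspaces\<close>
  define zs where "zs \<tau> = (\<Sum>j\<in>J. \<tau> j *\<^sub>R v j)" for \<tau> :: "nat \<Rightarrow> real"
  define w where "w \<tau> = (if zs \<tau> = 0 then v k0 else zs \<tau>)" for \<tau>
  define V where "V \<tau> = span (insert (w \<tau>) (v ` {..<k0}))" for \<tau>
  define F where "F = V ` (T ` B)"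
  have wU: "w \<tau> \<notin> U k0" for \<tau>
  proof (cases "zs \<tau> = 0")
    case True then show ?thesis unfolding w_def using vnot[OF k0(1)] by simp
  next
    case False
    show ?thesis
    proof
      assume "w \<tau> \<in> U k0"
      then have zU: "zs \<tau> \<in> U k0" using False unfolding w_def by simp
      have "\<tau> j = 0" if j: "j \<in> J" for j
      proof -
        have jd: "j < DIM('a)" "k0 \<le> j" using j unfolding J_def by auto
        have "a j (zs \<tau>) = \<tau> j" unfolding zs_def using a_sumv[OF finJ Jd jd(1)] j by simp
        moreover have "a j (zs \<tau>) = 0" using a_span[OF zU jd(2) jd(1)] .
        ultimately show ?thesis by simp
      qed
      then have "zs \<tau> = 0" unfolding zs_def by (intro sum.neutral) simp
      then show False using False by simp
    qed
  qed
  have indk0: "independent (v ` {..<k0})"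
    by (rule independent_mono[OF vind]) (use k0 in auto)
  have cardk0: "card (v ` {..<k0}) = k0"
    using inj_on_subset[OF vinj, of "{..<k0}"] k0 by (simp add: card_image)
  have dimV: "dim (V \<tau>) = k" for \<tau>
  proof -
    have nin: "w \<tau> \<notin> v ` {..<k0}"
    proof
      assume "w \<tau> \<in> v ` {..<k0}"
      then have "w \<tau> \<in> U k0" by (rule span_base)
      then show False using wU[of \<tau>] by simp
    qed
    have ind: "independent (insert (w \<tau>) (v ` {..<k0}))"
      using indk0 wU[of \<tau>] by (simp add: independent_insert)
    have "card (insert (w \<tau>) (v ` {..<k0})) = k" using nin cardk0 k0 by simp
    then show ?thesis unfolding V_def using dim_span_eq_card_independent[OF ind] by simp
  qed
  have covers: "x \<in> V (T x)" if x: "x \<in> B" for x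
  proof -
    define f where "f l = a l x *\<^sub>R v l" for l
    have split: "{..<DIM('a)} = {..<k0} \<union> J" unfolding J_def using k0 by auto
    have "x = (\<Sum>l<DIM('a). f l)" using a_sum[of x] unfolding f_def by simp
    also have "\<dots> = (\<Sum>l\<in>{..<k0} \<union> J. f l)" by (simp only: split)
    also have "\<dots> = (\<Sum>l<k0. f l) + (\<Sum>l\<in>J. f l)"
      by (rule sum.union_disjoint) (auto simp: J_def)
    finally have xe: "x = S k0 x + zs (T x)" unfolding S_def f_def zs_def T_def by simp
    have s1: "S k0 x \<in> V (T x)" unfolding V_def using S_U[of k0 x] span_mono[of "v ` {..<k0}" "insert (w (T x)) (v ` {..<k0})"]
      by blast
    show ?thesis
    proof (cases "zs (T x) = 0")
      case True then show ?thesis using xe s1 by simp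
    next
      case False
      then have "zs (T x) \<in> V (T x)" unfolding V_def w_def by (simp add: span_base)
      then show ?thesis using xe s1 span_add unfolding V_def by metis
    qed
  qed
  show ?thesis
  proof (intro exI[of _ F] conjI)
    show "finite F" unfolding F_def using finTB by simp
    show "\<forall>V\<in>F. subspace V \<and> dim V = k" unfolding F_def V_def using dimV[unfolded V_def]
      by (auto simp: subspace_span)
    show "L \<inter> cball 0 1 \<subseteq> \<Union> F" unfolding F_def using covers B_def by blast
    have "card F \<le> card (T ` B)" unfolding F_def by (rule card_image_le[OF finTB])
    then have "real (card F) \<le> real (card P)" using cardTB by simp
    then show "real (card F) \<le> (EEf DIM('a)) ^ DIM('a) / (\<Prod>i=k..DIM('a). lam i)" using cardP by simp
  qed
qed

end

theorem corollary3:
  fixes k :: nat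
  assumes "1 \<le> k" and "k \<le> DIM('a::euclidean_space) - 1"
  shows "\<exists>C::real. \<forall>L :: 'a set.
           is_lattice L \<and> succ_min L (cball 0 1) DIM('a) \<le> 1 \<longrightarrow>
           (\<exists>F :: 'a set set. finite F \<and>
              (\<forall>V\<in>F. subspace V \<and> dim V = k) \<and>
              L \<inter> cball 0 1 \<subseteq> \<Union>F \<and>
              real (card F) \<le> C / (\<Prod>i=k..DIM('a). succ_min L (cball 0 1) i))"
proof (intro exI[of _ "EEf DIM('a) ^ DIM('a)"] allI impI)
  fix L :: "'a set"
  assume H: "is_lattice L \<and> succ_min L (cball 0 1) DIM('a) \<le> 1"
  interpret lat L using H by (intro lat.intro) simp
  have k: "k \<le> DIM('a)" using assms by simp
  show "\<exists>F :: 'a set set. finite F \<and>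
              (\<forall>V\<in>F. subspace V \<and> dim V = k) \<and>
              L \<inter> cball 0 1 \<subseteq> \<Union>F \<and>
              real (card F) \<le> EEf DIM('a) ^ DIM('a) / (\<Prod>i=k..DIM('a). succ_min L (cball 0 1) i)"
    using cover[OF assms(1) k] H by simp
qed

end
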